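(* Let $G=K_n$ with $n\ge2$, and let $L$ be a list-assignment with $|L(v)|\ge\deg(v)+1=n$ for all $v\in V(G)$. If $\left|\bigcup_{v\in V(G)}L(v)\right|=n$, then all lists are identical and every $L$-colouring of $G$ is frozen. Otherwise, $\alpha\sim\beta$ for all $L$-colourings $\alpha,\beta$, and in fact $\mathrm{dist}_{\mathcal{C}(G,L)}(\alpha,\beta)\le 3n/2+2$.
   Context: An $L$-colouring is a proper colouring $\varphi$ with $\varphi(v)\in L(v)$ for all $v$. A vertex $v$ is frozen under $\varphi$ if every colour of $L(v)\setminus\{\varphi(v)\}$ appears on a neighbour of $v$; a colouring is frozen if all its vertices are frozen. $\mathcal{C}(G,L)$ is the graph whose vertices are the $L$-colourings, adjacent when they differ by a single-vertex recolouring (keeping the colouring a proper $L$-colouring); $\alpha\sim\beta$ means $\alpha$ and $\beta$ lie in the same component of $\mathcal{C}(G,L)$, and $\mathrm{dist}_{\mathcal{C}(G,L)}$ is the graph distance. *)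

theory Defs
  imports Complex_Main
begin

text \<open>A graph is given by a vertex set V and a symmetric irreflexive adjacency
  relation E. Colourings are functions on V that are undefined outside V.\<close>

definition L_colouring :: "'v set \<Rightarrow> ('v \<Rightarrow> 'v \<Rightarrow> bool) \<Rightarrow> ('v \<Rightarrow> 'c set) \<Rightarrow> ('v \<Rightarrow> 'c) \<Rightarrow> bool" where
  "L_colouring V E L \<phi> \<longleftrightarrow>
     (\<forall>v\<in>V. \<phi> v \<in> L v) \<and>
     (\<forall>u\<in>V. \<forall>v\<in>V. E u v \<longrightarrow> \<phi> u \<noteq> \<phi> v) \<and>
     (\<forall>v. v \<notin> V \<longrightarrow> \<phi> v = undefined)"

definition frozen_vertex :: "'v set \<Rightarrow> ('v \<Rightarrow> 'v \<Rightarrow> bool) \<Rightarrow> ('v \<Rightarrow> 'c set) \<Rightarrow> ('v \<Rightarrow> 'c) \<Rightarrow> 'v \<Rightarrow> bool" where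
  "frozen_vertex V E L \<phi> v \<longleftrightarrow> (\<forall>c \<in> L v - {\<phi> v}. \<exists>u\<in>V. E v u \<and> \<phi> u = c)"

definition frozen_colouring :: "'v set \<Rightarrow> ('v \<Rightarrow> 'v \<Rightarrow> bool) \<Rightarrow> ('v \<Rightarrow> 'c set) \<Rightarrow> ('v \<Rightarrow> 'c) \<Rightarrow> bool" where
  "frozen_colouring V E L \<phi> \<longleftrightarrow> (\<forall>v\<in>V. frozen_vertex V E L \<phi> v)"

definition recol_edges :: "'v set \<Rightarrow> ('v \<Rightarrow> 'v \<Rightarrow> bool) \<Rightarrow> ('v \<Rightarrow> 'c set) \<Rightarrow> (('v \<Rightarrow> 'c) \<times> ('v \<Rightarrow> 'c)) set" where
  "recol_edges V E L = {(\<alpha>, \<beta>). L_colouring V E L \<alpha> \<and> L_colouring V E L \<beta> \<and>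
      (\<exists>v\<in>V. \<alpha> v \<noteq> \<beta> v \<and> (\<forall>u. u \<noteq> v \<longrightarrow> \<alpha> u = \<beta> u))}"

definition recol_equiv :: "'v set \<Rightarrow> ('v \<Rightarrow> 'v \<Rightarrow> bool) \<Rightarrow> ('v \<Rightarrow> 'c set) \<Rightarrow> ('v \<Rightarrow> 'c) \<Rightarrow> ('v \<Rightarrow> 'c) \<Rightarrow> bool" where
  "recol_equiv V E L \<alpha> \<beta> \<longleftrightarrow> (\<alpha>, \<beta>) \<in> (recol_edges V E L)\<^sup>*"

text \<open>Graph distance in C(G,L) (meaningful when the colourings are in the same component).\<close>
definition recol_dist :: "'v set \<Rightarrow> ('v \<Rightarrow> 'v \<Rightarrow> bool) \<Rightarrow> ('v \<Rightarrow> 'c set) \<Rightarrow> ('v \<Rightarrow> 'c) \<Rightarrow> ('v \<Rightarrow> 'c) \<Rightarrow> nat" where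
  "recol_dist V E L \<alpha> \<beta> = (LEAST k. (\<alpha>, \<beta>) \<in> (recol_edges V E L) ^^ k)"

definition complete_adj :: "'v \<Rightarrow> 'v \<Rightarrow> bool" where
  "complete_adj u v \<longleftrightarrow> u \<noteq> v"

end

theory Submission
  imports Defs
begin

definition NF :: "'v set \<Rightarrow> ('v \<Rightarrow> 'c) \<Rightarrow> ('v \<Rightarrow> 'c) \<Rightarrow> 'v set" where
  "NF V a b = {v\<in>V. a v \<noteq> b v}"
definition BL :: "'v set \<Rightarrow> ('v \<Rightarrow> 'c) \<Rightarrow> ('v \<Rightarrow> 'c) \<Rightarrow> 'v set" where
  "BL V a b = {v\<in>V. a v \<noteq> b v \<and> (\<exists>u\<in>V. u \<noteq> v \<and> a u = b v)}"
definition Phi :: "'v set \<Rightarrow> ('v \<Rightarrow> 'c) \<Rightarrow> ('v \<Rightarrow> 'c) \<Rightarrow> nat" where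
  "Phi V a b = 2 * card (NF V a b) + card (BL V a b)"

lemma col_inj: "L_colouring V complete_adj L a \<Longrightarrow> u \<in> V \<Longrightarrow> v \<in> V \<Longrightarrow> a u = a v \<Longrightarrow> u = v"
  unfolding L_colouring_def complete_adj_def by blast

lemma col_inj_on: "L_colouring V complete_adj L a \<Longrightarrow> inj_on a V"
  by (meson col_inj inj_onI)

lemma col_upd:
  assumes "L_colouring V complete_adj L a" "v \<in> V" "c \<in> L v" "\<forall>u\<in>V. u \<noteq> v \<longrightarrow> a u \<noteq> c"
  shows "L_colouring V complete_adj L (a(v := c))"
  using assms unfolding L_colouring_def complete_adj_def by auto

lemma edge_upd:
  assumes "L_colouring V complete_adj L a" "L_colouring V complete_adj L (a(v := c))" "v \<in> V" "a v \<noteq> c"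
  shows "(a, a(v := c)) \<in> recol_edges V complete_adj L"
  using assms unfolding recol_edges_def by auto

lemma col_eq:
  assumes "L_colouring V complete_adj L a" "L_colouring V complete_adj L b" "NF V a b = {}"
  shows "a = b"
proof
  fix x show "a x = b x"
    using assms unfolding L_colouring_def NF_def by (cases "x \<in> V") auto
qed

lemma img_eq:
  assumes fin: "finite V" and a: "L_colouring V complete_adj L a" and b: "L_colouring V complete_adj L b"
    and sub: "NF V a b \<subseteq> BL V a b"
  shows "a ` V = b ` V"
proof -
  have "b ` V \<subseteq> a ` V"
  proof
    fix y assume "y \<in> b ` V"
    then obtain x where x: "x \<in> V" "y = b x" by auto
    show "y \<in> a ` V"
    proof (cases "a x = b x")
      case True then show ?thesis using x by (metis image_eqI)
    next
      case False
      then have "x \<in> BL V a b" using sub x unfolding NF_def by auto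
      then obtain u where "u \<in> V" "a u = b x" unfolding BL_def by blast
      then show ?thesis using x by (metis image_eqI)
    qed
  qed
  moreover have "card (a ` V) = card (b ` V)"
    using col_inj_on[OF a] col_inj_on[OF b] by (simp add: card_image)
  ultimately show ?thesis using card_subset_eq[of "a ` V" "b ` V"] fin by simp
qed

lemma stepA:
  assumes fin: "finite V" and a: "L_colouring V complete_adj L a" and b: "L_colouring V complete_adj L b"
    and v: "v \<in> NF V a b" "v \<notin> BL V a b"
  shows "\<exists>a'. L_colouring V complete_adj L a' \<and> (a, a') \<in> recol_edges V complete_adj L
     \<and> NF V a' b \<subseteq> NF V a b \<and> Phi V a' b + 2 \<le> Phi V a b"
proof -
  have vV: "v \<in> V" and ne: "a v \<noteq> b v" using v unfolding NF_def by auto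
  have free: "\<forall>u\<in>V. u \<noteq> v \<longrightarrow> a u \<noteq> b v" using v unfolding NF_def BL_def by auto
  have bv: "b v \<in> L v" using b vV unfolding L_colouring_def by auto
  define a' where "a' = a(v := b v)"
  have ca': "L_colouring V complete_adj L a'" unfolding a'_def by (rule col_upd[OF a vV bv free])
  have e: "(a, a') \<in> recol_edges V complete_adj L" unfolding a'_def
    by (rule edge_upd[OF a ca'[unfolded a'_def] vV ne])
  have N: "NF V a' b = NF V a b - {v}" unfolding NF_def a'_def by auto
  have B: "BL V a' b \<subseteq> BL V a b"
  proof
    fix x assume x: "x \<in> BL V a' b"
    then obtain u where u: "u \<in> V" "u \<noteq> x" "a' u = b x" and xV: "x \<in> V" and xn: "a' x \<noteq> b x"
      unfolding BL_def by auto
    have "x \<noteq> v" using xn unfolding a'_def by auto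
    have "u \<noteq> v"
    proof
      assume "u = v"
      then have "b v = b x" using u unfolding a'_def by auto
      then show False using col_inj[OF b vV xV] \<open>x \<noteq> v\<close> by auto
    qed
    then show "x \<in> BL V a b" using u xV xn \<open>x \<noteq> v\<close> unfolding BL_def a'_def by auto
  qed
  have fN: "finite (NF V a b)" and fB: "finite (BL V a b)" using fin unfolding NF_def BL_def by auto
  have c1: "card (NF V a' b) + 1 = card (NF V a b)"
  proof -
    have "card (NF V a b) > 0" using v(1) fN card_gt_0_iff by blast
    then show ?thesis unfolding N using v(1) fN by simp
  qed
  have c2: "card (BL V a' b) \<le> card (BL V a b)" using B fB card_mono by blast
  have "NF V a' b \<subseteq> NF V a b" using N by blast
  moreover have "Phi V a' b + 2 \<le> Phi V a b" using c1 c2 unfolding Phi_def by linarith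
  ultimately show ?thesis using ca' e by (intro exI[of _ a'] conjI)
qed

lemma stepB:
  assumes fin: "finite V" and a: "L_colouring V complete_adj L a" and b: "L_colouring V complete_adj L b"
    and sub: "NF V a b \<subseteq> BL V a b" and v: "v \<in> NF V a b" and c: "c \<in> L v" and cn: "c \<notin> a ` V"
  shows "\<exists>a'. L_colouring V complete_adj L a' \<and> (a, a') \<in> recol_edges V complete_adj L ^^ 2
     \<and> NF V a' b \<subseteq> NF V a b \<and> Phi V a' b + 4 \<le> Phi V a b"
proof -
  have S: "a ` V = b ` V" by (rule img_eq[OF fin a b sub])
  have vV: "v \<in> V" and nev: "a v \<noteq> b v" using v unfolding NF_def by auto
  have "a v \<in> b ` V" using S vV by blast
  then obtain u where uV: "u \<in> V" and bu: "b u = a v" by auto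
  have uv: "u \<noteq> v" using bu nev by auto
  have au: "a u \<noteq> b u" using col_inj[OF a uV vV] bu uv by auto
  have "a u \<in> b ` V" using S uV by blast
  then obtain t where tV: "t \<in> V" and bt: "b t = a u" by auto
  have tu: "t \<noteq> u" using bt au by auto
  have at: "a t \<noteq> b t" using col_inj[OF a tV uV] bt tu by auto
  have cx: "\<forall>x\<in>V. a x \<noteq> c" using cn by blast
  have cbv: "c \<noteq> b v" using cn S vV by blast
  define a1 where "a1 = a(v := c)"
  have ca1: "L_colouring V complete_adj L a1" unfolding a1_def
    by (rule col_upd[OF a vV c]) (use cx in auto)
  have e1: "(a, a1) \<in> recol_edges V complete_adj L" unfolding a1_def
    by (rule edge_upd[OF a ca1[unfolded a1_def] vV]) (use cx vV in auto)
  have buL: "b u \<in> L u" using b uV unfolding L_colouring_def by auto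
  define a2 where "a2 = a1(u := b u)"
  have free2: "\<forall>x\<in>V. x \<noteq> u \<longrightarrow> a1 x \<noteq> b u"
  proof (intro ballI impI)
    fix x assume xV: "x \<in> V" and xu: "x \<noteq> u"
    show "a1 x \<noteq> b u"
    proof (cases "x = v")
      case True then show ?thesis using cx vV bu unfolding a1_def by auto
    next
      case False then show ?thesis using col_inj[OF a xV vV] bu unfolding a1_def by auto
    qed
  qed
  have ca2: "L_colouring V complete_adj L a2" unfolding a2_def
    by (rule col_upd[OF ca1 uV buL free2])
  have e2: "(a1, a2) \<in> recol_edges V complete_adj L" unfolding a2_def
    by (rule edge_upd[OF ca1 ca2[unfolded a2_def] uV]) (use au uv in \<open>auto simp: a1_def\<close>)
  have path: "(a, a2) \<in> recol_edges V complete_adj L ^^ 2"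
    using e1 e2 by (auto simp: numeral_2_eq_2 intro: relpow_Suc_I relpow_Suc_I2)
  have N: "NF V a2 b = NF V a b - {u}"
    using cbv uv nev unfolding NF_def a2_def a1_def by auto
  have B: "BL V a2 b \<subseteq> BL V a b - {u, t}"
  proof
    fix x assume x: "x \<in> BL V a2 b"
    then have xN: "x \<in> NF V a2 b" unfolding BL_def NF_def by auto
    then have "x \<in> BL V a b" "x \<noteq> u" using N sub by auto
    moreover have "x \<noteq> t"
    proof
      assume xt: "x = t"
      then obtain w where wV: "w \<in> V" and wt: "w \<noteq> t" and aw: "a2 w = b t"
        using x unfolding BL_def by auto
      show False
      proof (cases "w = u")
        case True then show ?thesis using aw bt bu col_inj[OF a uV vV] uv unfolding a2_def by auto
      next
        case False
        show ?thesis
        proof (cases "w = v")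
          case True then show ?thesis using aw bt cx uV False unfolding a2_def a1_def by auto
        next
          case False2: False
          then have "a w = a u" using aw bt False unfolding a2_def a1_def by auto
          then show ?thesis using col_inj[OF a wV uV] False by auto
        qed
      qed
    qed
    ultimately show "x \<in> BL V a b - {u, t}" by auto
  qed
  have fN: "finite (NF V a b)" and fB: "finite (BL V a b)" using fin unfolding NF_def BL_def by auto
  have uN: "u \<in> NF V a b" using uV au unfolding NF_def by auto
  have tN: "t \<in> NF V a b" using tV at unfolding NF_def by auto
  have uB: "u \<in> BL V a b" and tB: "t \<in> BL V a b" using uN tN sub by auto
  have c1: "card (NF V a2 b) + 1 = card (NF V a b)"
  proof -
    have "card (NF V a b) > 0" using uN fN card_gt_0_iff by blast
    then show ?thesis unfolding N using uN fN by simp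
  qed
  have "card (BL V a b - {u, t}) = card (BL V a b) - 2"
    using uB tB tu fB by (subst card_Diff_subset) auto
  moreover have "card (BL V a b) \<ge> 2"
  proof -
    have "card {u, t} \<le> card (BL V a b)" using uB tB fB by (intro card_mono) auto
    then show ?thesis using tu by simp
  qed
  moreover have "card (BL V a2 b) \<le> card (BL V a b - {u, t})"
    using B fB by (intro card_mono) auto
  ultimately have c2: "card (BL V a2 b) + 2 \<le> card (BL V a b)" by linarith
  have "NF V a2 b \<subseteq> NF V a b" using N by blast
  moreover have "Phi V a2 b + 4 \<le> Phi V a b" using c1 c2 unfolding Phi_def by linarith
  ultimately show ?thesis using ca2 path by (intro exI[of _ a2] conjI)
qed


lemma compose1: "(x, y) \<in> R ^^ j \<Longrightarrow> (y, z) \<in> R ^^ k \<Longrightarrow> (x, z) \<in> R ^^ (j + k)"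
  by (metis relcomp.relcompI relpow_add)

lemma lem1:
  assumes fin: "finite V" and b: "L_colouring V complete_adj L b"
  shows "L_colouring V complete_adj L a \<Longrightarrow> (\<forall>v\<in>NF V a b. \<not> L v \<subseteq> b ` V)
    \<Longrightarrow> \<exists>k. (a, b) \<in> recol_edges V complete_adj L ^^ k \<and> 2 * k \<le> Phi V a b"
proof (induction "Phi V a b" arbitrary: a rule: less_induct)
  case less
  note a = less.prems(1)
  show ?case
  proof (cases "NF V a b = {}")
    case True
    then have "a = b" using col_eq[OF a b] by auto
    then show ?thesis by (intro exI[of _ 0]) auto
  next
    case False
    show ?thesis
    proof (cases "\<exists>v. v \<in> NF V a b \<and> v \<notin> BL V a b")
      case True
      then obtain v where "v \<in> NF V a b" "v \<notin> BL V a b" by auto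
      from stepA[OF fin a b this] obtain a' where a': "L_colouring V complete_adj L a'"
        "(a, a') \<in> recol_edges V complete_adj L" "NF V a' b \<subseteq> NF V a b" "Phi V a' b + 2 \<le> Phi V a b"
        by blast
      have "\<forall>v\<in>NF V a' b. \<not> L v \<subseteq> b ` V" using less.prems(2) a'(3) by blast
      from less.hyps[of a', OF _ a'(1) this] a'(4) obtain k where
        k: "(a', b) \<in> recol_edges V complete_adj L ^^ k" "2 * k \<le> Phi V a' b" by auto
      have "(a, b) \<in> recol_edges V complete_adj L ^^ (1 + k)"
        using compose1[OF _ k(1)] a'(2) by (metis relpow_1)
      then show ?thesis using k(2) a'(4) by (intro exI[of _ "1 + k"]) auto
    next
      case False2: False
      then have sub: "NF V a b \<subseteq> BL V a b" by auto
      obtain v where v: "v \<in> NF V a b" using False by auto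
      then obtain c where c: "c \<in> L v" "c \<notin> b ` V" using less.prems(2) by auto
      have "c \<notin> a ` V" using c img_eq[OF fin a b sub] by auto
      from stepB[OF fin a b sub v c(1) this] obtain a' where a': "L_colouring V complete_adj L a'"
        "(a, a') \<in> recol_edges V complete_adj L ^^ 2" "NF V a' b \<subseteq> NF V a b" "Phi V a' b + 4 \<le> Phi V a b"
        by blast
      have "\<forall>v\<in>NF V a' b. \<not> L v \<subseteq> b ` V" using less.prems(2) a'(3) by blast
      from less.hyps[of a', OF _ a'(1) this] a'(4) obtain k where
        k: "(a', b) \<in> recol_edges V complete_adj L ^^ k" "2 * k \<le> Phi V a' b" by auto
      have "(a, b) \<in> recol_edges V complete_adj L ^^ (2 + k)"
        using compose1[OF a'(2) k(1)] .
      then show ?thesis using k(2) a'(4) by (intro exI[of _ "2 + k"]) auto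
    qed
  qed
qed


lemma trick:
  assumes fin: "finite V" and a: "L_colouring V complete_adj L a" and b: "L_colouring V complete_adj L b"
    and wV: "w \<in> V" and cw: "c \<in> L w" and cb: "c \<notin> b ` V"
    and cardL: "\<forall>v\<in>V. card (L v) \<ge> card V"
    and sub: "NF V a b \<subseteq> BL V a b" and allL: "\<forall>v\<in>NF V a b. L v \<subseteq> b ` V"
  shows "\<exists>k. (a, b) \<in> recol_edges V complete_adj L ^^ k \<and> 2 * k \<le> Phi V a b + 4"
proof -
  have S: "a ` V = b ` V" by (rule img_eq[OF fin a b sub])
  have wN: "w \<notin> NF V a b" using allL cw cb by blast
  then have aw: "a w = b w" using wV unfolding NF_def by auto
  have ca: "\<forall>x\<in>V. a x \<noteq> c" using cb S by blast
  have cbx: "\<forall>x\<in>V. b x \<noteq> c" using cb by blast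
  define g where "g = a(w := c)"
  define b' where "b' = b(w := c)"
  have cg: "L_colouring V complete_adj L g" unfolding g_def
    by (rule col_upd[OF a wV cw]) (use ca in auto)
  have cb': "L_colouring V complete_adj L b'" unfolding b'_def
    by (rule col_upd[OF b wV cw]) (use cbx in auto)
  have e1: "(a, g) \<in> recol_edges V complete_adj L" unfolding g_def
    by (rule edge_upd[OF a cg[unfolded g_def] wV]) (use ca wV in auto)
  have bb: "b = b'(w := b w)" unfolding b'_def by simp
  have e2: "(b', b) \<in> recol_edges V complete_adj L"
    using edge_upd[OF cb' _ wV, of "b w"] b bb cbx wV unfolding b'_def by auto
  have NFeq: "NF V g b' = NF V a b" using aw unfolding NF_def g_def b'_def by auto
  have BLeq: "BL V g b' = BL V a b"
  proof (rule set_eqI)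
    fix x
    show "x \<in> BL V g b' \<longleftrightarrow> x \<in> BL V a b"
    proof (cases "x = w")
      case True then show ?thesis using aw unfolding BL_def g_def b'_def by auto
    next
      case False
      show ?thesis
      proof (cases "x \<in> V")
        case xV: True
        have "(\<exists>u\<in>V. u \<noteq> x \<and> g u = b x) \<longleftrightarrow> (\<exists>u\<in>V. u \<noteq> x \<and> a u = b x)"
        proof
          assume "\<exists>u\<in>V. u \<noteq> x \<and> g u = b x"
          then obtain u where u: "u \<in> V" "u \<noteq> x" "g u = b x" by auto
          have "u \<noteq> w" using u cbx xV unfolding g_def by auto
          then show "\<exists>u\<in>V. u \<noteq> x \<and> a u = b x" using u unfolding g_def by auto
        next
          assume "\<exists>u\<in>V. u \<noteq> x \<and> a u = b x"
          then obtain u where u: "u \<in> V" "u \<noteq> x" "a u = b x" by auto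
          have "u \<noteq> w" using u aw col_inj[OF b wV xV] False by auto
          then show "\<exists>u\<in>V. u \<noteq> x \<and> g u = b x" using u unfolding g_def by auto
        qed
        then show ?thesis using False unfolding BL_def g_def b'_def by auto
      next
        case False
        then show ?thesis unfolding BL_def by auto
      qed
    qed
  qed
  have PhiEq: "Phi V g b' = Phi V a b" unfolding Phi_def NFeq BLeq ..
  have hyp: "\<forall>v\<in>NF V g b'. \<not> L v \<subseteq> b' ` V"
  proof
    fix v assume "v \<in> NF V g b'"
    then have vN: "v \<in> NF V a b" using NFeq by simp
    then have vV: "v \<in> V" unfolding NF_def by auto
    have sub2: "L v \<subseteq> b ` V" using allL vN by auto
    have "card (b ` V) = card V" using col_inj_on[OF b] by (simp add: card_image)
    then have "card (b ` V) \<le> card (L v)" using cardL vV by auto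
    moreover have "card (L v) \<le> card (b ` V)" using card_mono[OF _ sub2] fin by simp
    ultimately have "card (L v) = card (b ` V)" by linarith
    then have "L v = b ` V" using card_subset_eq[OF _ sub2] fin by simp
    then have bwL: "b w \<in> L v" using wV by auto
    have "b w \<notin> b' ` V"
    proof
      assume "b w \<in> b' ` V"
      then obtain x where x: "x \<in> V" "b' x = b w" by auto
      show False
      proof (cases "x = w")
        case True then show False using x cbx wV unfolding b'_def by auto
      next
        case False then show False using x col_inj[OF b x(1) wV] unfolding b'_def by auto
      qed
    qed
    then show "\<not> L v \<subseteq> b' ` V" using bwL by blast
  qed
  obtain k where k: "(g, b') \<in> recol_edges V complete_adj L ^^ k" "2 * k \<le> Phi V g b'"
    using lem1[OF fin cb' cg hyp] by blast
  have "(a, b') \<in> recol_edges V complete_adj L ^^ (1 + k)"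
    using compose1[OF _ k(1)] e1 by (metis relpow_1)
  then have "(a, b) \<in> recol_edges V complete_adj L ^^ (1 + k + 1)"
    using compose1[of a b' "1 + k" "recol_edges V complete_adj L" b 1] e2 by (metis relpow_1)
  then show ?thesis using k(2) PhiEq by (intro exI[of _ "1 + k + 1"]) auto
qed

lemma lem2:
  assumes fin: "finite V" and b: "L_colouring V complete_adj L b"
    and wV: "w \<in> V" and cw: "c \<in> L w" and cb: "c \<notin> b ` V"
    and cardL: "\<forall>v\<in>V. card (L v) \<ge> card V"
  shows "L_colouring V complete_adj L a
    \<Longrightarrow> \<exists>k. (a, b) \<in> recol_edges V complete_adj L ^^ k \<and> 2 * k \<le> Phi V a b + 4"
proof (induction "Phi V a b" arbitrary: a rule: less_induct)
  case less
  note a = less.prems(1)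
  show ?case
  proof (cases "NF V a b = {}")
    case True
    then have "a = b" using col_eq[OF a b] by auto
    then show ?thesis by (intro exI[of _ 0]) auto
  next
    case False
    show ?thesis
    proof (cases "\<exists>v. v \<in> NF V a b \<and> v \<notin> BL V a b")
      case True
      then obtain v where "v \<in> NF V a b" "v \<notin> BL V a b" by auto
      from stepA[OF fin a b this] obtain a' where a': "L_colouring V complete_adj L a'"
        "(a, a') \<in> recol_edges V complete_adj L" "NF V a' b \<subseteq> NF V a b" "Phi V a' b + 2 \<le> Phi V a b"
        by blast
      from less.hyps[of a', OF _ a'(1)] a'(4) obtain k where
        k: "(a', b) \<in> recol_edges V complete_adj L ^^ k" "2 * k \<le> Phi V a' b + 4" by auto
      have "(a, b) \<in> recol_edges V complete_adj L ^^ (1 + k)"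
        using compose1[OF _ k(1)] a'(2) by (metis relpow_1)
      then show ?thesis using k(2) a'(4) by (intro exI[of _ "1 + k"]) auto
    next
      case False2: False
      then have sub: "NF V a b \<subseteq> BL V a b" by auto
      show ?thesis
      proof (cases "\<exists>v\<in>NF V a b. \<not> L v \<subseteq> b ` V")
        case True
        then obtain v c where v: "v \<in> NF V a b" and c: "c \<in> L v" "c \<notin> b ` V" by auto
        have "c \<notin> a ` V" using c img_eq[OF fin a b sub] by auto
        from stepB[OF fin a b sub v c(1) this] obtain a' where a': "L_colouring V complete_adj L a'"
          "(a, a') \<in> recol_edges V complete_adj L ^^ 2" "NF V a' b \<subseteq> NF V a b" "Phi V a' b + 4 \<le> Phi V a b"
          by blast
        from less.hyps[of a', OF _ a'(1)] a'(4) obtain k where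
          k: "(a', b) \<in> recol_edges V complete_adj L ^^ k" "2 * k \<le> Phi V a' b + 4" by auto
        have "(a, b) \<in> recol_edges V complete_adj L ^^ (2 + k)"
          using compose1[OF a'(2) k(1)] .
        then show ?thesis using k(2) a'(4) by (intro exI[of _ "2 + k"]) auto
      next
        case False3: False
        then have "\<forall>v\<in>NF V a b. L v \<subseteq> b ` V" by auto
        then show ?thesis using trick[OF fin a b wV cw cb cardL sub] by blast
      qed
    qed
  qed
qed


theorem mainTheorem17:
  fixes V :: "'v set" and L :: "'v \<Rightarrow> 'c set" and n :: nat
  assumes "finite V" and "card V = n" and "n \<ge> 2"
    and "\<forall>v\<in>V. card (L v) \<ge> n"
  shows "(card (\<Union>v\<in>V. L v) = n \<longrightarrow>
            (\<forall>u\<in>V. \<forall>v\<in>V. L u = L v) \<and>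
            (\<forall>\<phi>. L_colouring V complete_adj L \<phi> \<longrightarrow> frozen_colouring V complete_adj L \<phi>))
       \<and> (card (\<Union>v\<in>V. L v) \<noteq> n \<longrightarrow>
            (\<forall>\<alpha> \<beta>. L_colouring V complete_adj L \<alpha> \<and> L_colouring V complete_adj L \<beta> \<longrightarrow>
               recol_equiv V complete_adj L \<alpha> \<beta> \<and>
               real (recol_dist V complete_adj L \<alpha> \<beta>) \<le> 3 * real n / 2 + 2))"
proof -
  note fin = assms(1)
  define U where "U = (\<Union>v\<in>V. L v)"
  have finL: "\<forall>v\<in>V. finite (L v)"
  proof
    fix v assume "v \<in> V" then have "card (L v) \<ge> 2" using assms(3,4) by auto
    then show "finite (L v)" by (metis card.infinite not_numeral_le_zero)
  qed
  have finU: "finite U" unfolding U_def using fin finL by auto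
  have LU: "\<forall>v\<in>V. L v \<subseteq> U" unfolding U_def by auto
  have part1: "card U = n \<longrightarrow>
            (\<forall>u\<in>V. \<forall>v\<in>V. L u = L v) \<and>
            (\<forall>\<phi>. L_colouring V complete_adj L \<phi> \<longrightarrow> frozen_colouring V complete_adj L \<phi>)"
  proof
    assume cU: "card U = n"
    have eq: "\<forall>v\<in>V. L v = U"
    proof
      fix v assume vV: "v \<in> V"
      have "card (L v) \<le> card U" using card_mono[OF finU] LU vV by auto
      then have "card (L v) = card U" using cU assms(4) vV by auto
      then show "L v = U" using card_subset_eq[OF finU] LU vV by auto
    qed
    show "(\<forall>u\<in>V. \<forall>v\<in>V. L u = L v) \<and>
            (\<forall>\<phi>. L_colouring V complete_adj L \<phi> \<longrightarrow> frozen_colouring V complete_adj L \<phi>)"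
    proof (intro conjI allI impI)
      show "\<forall>u\<in>V. \<forall>v\<in>V. L u = L v" using eq by auto
    next
      fix \<phi> assume ph: "L_colouring V complete_adj L \<phi>"
      have sub: "\<phi> ` V \<subseteq> U" using ph LU unfolding L_colouring_def by auto
      have "card (\<phi> ` V) = n" using col_inj_on[OF ph] assms(2) by (simp add: card_image)
      then have imU: "\<phi> ` V = U" using card_subset_eq[OF finU sub] cU by simp
      show "frozen_colouring V complete_adj L \<phi>"
        unfolding frozen_colouring_def frozen_vertex_def
      proof (intro ballI)
        fix v c assume vV: "v \<in> V" and c: "c \<in> L v - {\<phi> v}"
        then have "c \<in> \<phi> ` V" using imU eq by auto
        then obtain u where "u \<in> V" "\<phi> u = c" by auto
        then show "\<exists>u\<in>V. complete_adj v u \<and> \<phi> u = c" using c unfolding complete_adj_def by auto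
      qed
    qed
  qed
  have part2: "card U \<noteq> n \<longrightarrow>
            (\<forall>\<alpha> \<beta>. L_colouring V complete_adj L \<alpha> \<and> L_colouring V complete_adj L \<beta> \<longrightarrow>
               recol_equiv V complete_adj L \<alpha> \<beta> \<and>
               real (recol_dist V complete_adj L \<alpha> \<beta>) \<le> 3 * real n / 2 + 2)"
  proof (intro impI allI)
    fix \<alpha> \<beta> assume cU: "card U \<noteq> n"
      and ab: "L_colouring V complete_adj L \<alpha> \<and> L_colouring V complete_adj L \<beta>"
    then have a: "L_colouring V complete_adj L \<alpha>" and b: "L_colouring V complete_adj L \<beta>" by auto
    have cb: "card (\<beta> ` V) = n" using col_inj_on[OF b] assms(2) by (simp add: card_image)
    have "\<exists>w\<in>V. \<exists>c\<in>L w. c \<notin> \<beta> ` V"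
    proof (rule ccontr)
      assume "\<not> ?thesis"
      then have "U \<subseteq> \<beta> ` V" unfolding U_def by auto
      then have "card U \<le> card (\<beta> ` V)" using fin by (intro card_mono) auto
      then have le: "card U \<le> n" using cb by simp
      have "V \<noteq> {}" using assms(2,3) by auto
      then obtain v where vV: "v \<in> V" by auto
      have "card (L v) \<le> card U" using card_mono[OF finU] LU vV by auto
      then show False using le cU assms(4) vV by auto
    qed
    then obtain w c where wV: "w \<in> V" and cw: "c \<in> L w" and cnb: "c \<notin> \<beta> ` V" by auto
    have cardL: "\<forall>v\<in>V. card (L v) \<ge> card V" using assms(2,4) by auto
    obtain k where k: "(\<alpha>, \<beta>) \<in> recol_edges V complete_adj L ^^ k" "2 * k \<le> Phi V \<alpha> \<beta> + 4"
      using lem2[OF fin b wV cw cnb cardL a] by blast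
    have s1: "NF V \<alpha> \<beta> \<subseteq> V" unfolding NF_def by auto
    have s2: "BL V \<alpha> \<beta> \<subseteq> V" unfolding BL_def by auto
    have "card (NF V \<alpha> \<beta>) \<le> n" using card_mono[OF fin s1] assms(2) by simp
    moreover have "card (BL V \<alpha> \<beta>) \<le> n" using card_mono[OF fin s2] assms(2) by simp
    ultimately have "2 * k \<le> 3 * n + 4" using k(2) unfolding Phi_def by linarith
    moreover have "recol_dist V complete_adj L \<alpha> \<beta> \<le> k"
      unfolding recol_dist_def using k(1) by (rule Least_le)
    ultimately have "2 * recol_dist V complete_adj L \<alpha> \<beta> \<le> 3 * n + 4" by linarith
    then have "real (2 * recol_dist V complete_adj L \<alpha> \<beta>) \<le> real (3 * n + 4)" by linarith
    then have "real (recol_dist V complete_adj L \<alpha> \<beta>) \<le> 3 * real n / 2 + 2" by simp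
    moreover have "recol_equiv V complete_adj L \<alpha> \<beta>"
      unfolding recol_equiv_def using k(1) relpow_imp_rtrancl by blast
    ultimately show "recol_equiv V complete_adj L \<alpha> \<beta> \<and>
               real (recol_dist V complete_adj L \<alpha> \<beta>) \<le> 3 * real n / 2 + 2" by auto
  qed
  show ?thesis using part1 part2 unfolding U_def by blast
qed

end
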